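(* If $\Gamma$ is a connected mutation-finite graph with at least $4$ vertices, then every connected subgraph of $\Gamma$ with $3$ vertices is of type $\mathbf{A}_3$ or $\widehat{\mathbf{A}}_2$, i.e. is isomorphic to one of the following six graphs on vertices $1,2,3$ (all arrows single unless stated): $1\to2\to3$; $2\to1$ and $2\to3$; $1\to2$ and $3\to2$; $1\to2\to3\to1$; $1\to2\to3$ and $1\to3$; $1\to2\to3$ together with two arrows $3\to1$.
   Context: A graph here is a finite directed multigraph with no loops and no oriented $2$-cycles; multiple arrows in the same direction are allowed. The mutation $\mu_k\Gamma$ at a vertex $k$: for every pair of arrows $i\to k$, $k\to j$ add an arrow $i\to j$; reverse all arrows incident to $k$; then delete pairs of opposite arrows $i\to j$, $j\to i$ until no oriented $2$-cycles remain. $\Gamma$ is mutation-finite if only finitely many isomorphism classes of graphs are obtainable from it by sequences of mutations. Connected means the underlying undirected graph is connected. Subgraph always means full (induced) subgraph: a subset of the vertices with all arrows between them. *)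

theory Defs
  imports Main
begin

text \<open>A graph on a finite vertex set V is a function E :: 'a => 'a => nat,
  E i j = number of arrows i -> j. No loops, no oriented 2-cycles,
  arrows only between vertices of V.\<close>

definition quiver :: "'a set \<Rightarrow> ('a \<Rightarrow> 'a \<Rightarrow> nat) \<Rightarrow> bool" where
  "quiver V E \<longleftrightarrow> finite V \<and> (\<forall>x. E x x = 0)
     \<and> (\<forall>x y. E x y > 0 \<longrightarrow> E y x = 0)
     \<and> (\<forall>x y. E x y > 0 \<longrightarrow> x \<in> V \<and> y \<in> V)"

text \<open>Mutation at k: add E i k * E k j arrows i -> j for i,j distinct from k,
  reverse arrows at k, then cancel 2-cycles (truncated subtraction).\<close>

definition mutate :: "'a \<Rightarrow> ('a \<Rightarrow> 'a \<Rightarrow> nat) \<Rightarrow> ('a \<Rightarrow> 'a \<Rightarrow> nat)" where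
  "mutate k E = (\<lambda>i j. if i = k \<or> j = k then E j i
      else (E i j + E i k * E k j) - (E j i + E j k * E k i))"

inductive mut_reach :: "'a set \<Rightarrow> ('a \<Rightarrow> 'a \<Rightarrow> nat) \<Rightarrow> ('a \<Rightarrow> 'a \<Rightarrow> nat) \<Rightarrow> bool"
  for V E where
  refl: "mut_reach V E E"
| step: "mut_reach V E F \<Longrightarrow> k \<in> V \<Longrightarrow> mut_reach V E (mutate k F)"

definition graph_iso :: "'a set \<Rightarrow> ('a \<Rightarrow> 'a \<Rightarrow> nat) \<Rightarrow> 'b set \<Rightarrow> ('b \<Rightarrow> 'b \<Rightarrow> nat) \<Rightarrow> bool" where
  "graph_iso V E W G \<longleftrightarrow> (\<exists>f. bij_betw f V W \<and> (\<forall>x\<in>V. \<forall>y\<in>V. G (f x) (f y) = E x y))"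

definition mutation_finite :: "'a set \<Rightarrow> ('a \<Rightarrow> 'a \<Rightarrow> nat) \<Rightarrow> bool" where
  "mutation_finite V E \<longleftrightarrow> (\<exists>S. finite S \<and>
     (\<forall>F. mut_reach V E F \<longrightarrow> (\<exists>G\<in>S. graph_iso V F V G)))"

definition connected_on :: "'a set \<Rightarrow> ('a \<Rightarrow> 'a \<Rightarrow> nat) \<Rightarrow> bool" where
  "connected_on W E \<longleftrightarrow> W \<noteq> {} \<and>
     (\<forall>x\<in>W. \<forall>y\<in>W. (x, y) \<in> {(u, v). u \<in> W \<and> v \<in> W \<and> (E u v > 0 \<or> E v u > 0)}\<^sup>*)"

definition A3_a :: "nat \<Rightarrow> nat \<Rightarrow> nat" where
  "A3_a i j = (if (i, j) = (1, 2) \<or> (i, j) = (2, 3) then 1 else 0)"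
definition A3_b :: "nat \<Rightarrow> nat \<Rightarrow> nat" where
  "A3_b i j = (if (i, j) = (2, 1) \<or> (i, j) = (2, 3) then 1 else 0)"
definition A3_c :: "nat \<Rightarrow> nat \<Rightarrow> nat" where
  "A3_c i j = (if (i, j) = (1, 2) \<or> (i, j) = (3, 2) then 1 else 0)"
definition A3_d :: "nat \<Rightarrow> nat \<Rightarrow> nat" where
  "A3_d i j = (if (i, j) = (1, 2) \<or> (i, j) = (2, 3) \<or> (i, j) = (3, 1) then 1 else 0)"
definition A2hat_e :: "nat \<Rightarrow> nat \<Rightarrow> nat" where
  "A2hat_e i j = (if (i, j) = (1, 2) \<or> (i, j) = (2, 3) \<or> (i, j) = (1, 3) then 1 else 0)"
definition A2hat_f :: "nat \<Rightarrow> nat \<Rightarrow> nat" where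
  "A2hat_f i j = (if (i, j) = (1, 2) \<or> (i, j) = (2, 3) then 1
                  else if (i, j) = (3, 1) then 2 else 0)"

definition type_A3_or_A2hat :: "'a set \<Rightarrow> ('a \<Rightarrow> 'a \<Rightarrow> nat) \<Rightarrow> bool" where
  "type_A3_or_A2hat W E \<longleftrightarrow>
     (\<exists>G\<in>{A3_a, A3_b, A3_c, A3_d, A2hat_e, A2hat_f}. graph_iso W E {1, 2, 3} G)"

end

theory Submission
  imports Defs
begin


definition cyc :: "('a \<Rightarrow> 'a \<Rightarrow> nat) \<Rightarrow> 'a \<Rightarrow> 'a \<Rightarrow> 'a \<Rightarrow> nat \<Rightarrow> nat \<Rightarrow> nat \<Rightarrow> bool" where
  "cyc F x y z a b c \<longleftrightarrow> F x y = a \<and> F y z = b \<and> F z x = c \<and> F y x = 0 \<and> F z y = 0 \<and> F x z = 0"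

lemma cyc_rot: "cyc F x y z a b c \<Longrightarrow> cyc F y z x b c a"
  unfolding cyc_def by auto

lemma cyc_mut: assumes "cyc F x y z a b c" "distinct [x,y,z]" "c \<le> a*b"
  shows "cyc (mutate y F) x z y (a*b-c) b a"
  using assms unfolding cyc_def mutate_def by auto

lemma path_mut: assumes "F x y = a" "F y z = b" "F y x = 0" "F z y = 0" "F z x = 0" "F x z = c"
  "distinct [x,y,z]"
  shows "cyc (mutate y F) x z y (a*b+c) b a"
  using assms unfolding cyc_def mutate_def by auto

lemma src_mut: assumes "F y x = a" "F y z = b" "F x y = 0" "F z y = 0" "F z x = 0" "F x z = 0"
  "distinct [x,y,z]"
  shows "mutate x F x y = a \<and> mutate x F y z = b \<and> mutate x F y x = 0 \<and> mutate x F z y = 0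
     \<and> mutate x F z x = 0 \<and> mutate x F x z = 0"
  using assms unfolding mutate_def by auto

lemma snk_mut: assumes "F x y = a" "F z y = b" "F y x = 0" "F y z = 0" "F z x = 0" "F x z = 0"
  "distinct [x,y,z]"
  shows "mutate x F z y = b \<and> mutate x F y x = a \<and> mutate x F y z = 0 \<and> mutate x F x y = 0
     \<and> mutate x F x z = 0 \<and> mutate x F z x = 0"
  using assms unfolding mutate_def by auto

lemma ar1: fixes a b c :: nat
  assumes "2\<le>a" "2\<le>b" "2\<le>c" "c\<le>a" "c\<le>b" "6<a+b+c" shows "2*c < a*b"
proof (cases "a = 2")
  case True
  then have "c = 2" using assms by auto
  then have "b > 2" using assms True by auto
  then show ?thesis using True \<open>c = 2\<close> by auto
next
  case False
  then have "3 \<le> a" using assms by auto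
  then have "3*b \<le> a*b" by (rule mult_le_mono1)
  then show ?thesis using assms by linarith
qed

lemma mf_bound: assumes "quiver V E" "mutation_finite V E"
  shows "\<exists>B. \<forall>F. mut_reach V E F \<longrightarrow> (\<forall>u\<in>V. \<forall>v\<in>V. F u v \<le> B)"
proof -
  obtain S where S: "finite S" "\<forall>F. mut_reach V E F \<longrightarrow> (\<exists>G\<in>S. graph_iso V F V G)"
    using assms(2) unfolding mutation_finite_def by blast
  have fV: "finite V" using assms(1) unfolding quiver_def by auto
  define B where "B = (\<Sum>G\<in>S. \<Sum>p\<in>V\<times>V. G (fst p) (snd p))"
  have "\<forall>F. mut_reach V E F \<longrightarrow> (\<forall>u\<in>V. \<forall>v\<in>V. F u v \<le> B)"
  proof (intro allI impI ballI)
    fix F u v assume R: "mut_reach V E F" and uv: "u \<in> V" "v \<in> V"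
    obtain G f where G: "G \<in> S" "bij_betw f V V" "\<forall>x\<in>V. \<forall>y\<in>V. G (f x) (f y) = F x y"
      using S(2) R unfolding graph_iso_def by blast
    have fu: "f u \<in> V" "f v \<in> V" using G(2) uv bij_betwE by blast+
    have "F u v = G (f u) (f v)" using G(3) uv by auto
    also have "\<dots> = (\<lambda>p. G (fst p) (snd p)) (f u, f v)" by simp
    also have "\<dots> \<le> (\<Sum>p\<in>V\<times>V. G (fst p) (snd p))"
      by (rule member_le_sum) (use fu fV in auto)
    also have "\<dots> \<le> B" unfolding B_def
      by (rule member_le_sum[of G S "\<lambda>G. \<Sum>p\<in>V\<times>V. G (fst p) (snd p)"]) (use G S in auto)
    finally show "F u v \<le> B" .
  qed
  then show ?thesis by blast
qed

context
  fixes V :: "'a set" and E :: "'a \<Rightarrow> 'a \<Rightarrow> nat" and B :: nat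
  assumes bnd: "\<forall>F. mut_reach V E F \<longrightarrow> (\<forall>u\<in>V. \<forall>v\<in>V. F u v \<le> B)"
begin

definition Big :: "nat \<Rightarrow> bool" where
  "Big s \<longleftrightarrow> (\<exists>F x y z a b c. mut_reach V E F \<and> x\<in>V \<and> y\<in>V \<and> z\<in>V \<and> distinct [x,y,z]
     \<and> cyc F x y z a b c \<and> 2\<le>a \<and> 2\<le>b \<and> 2\<le>c \<and> 6<a+b+c \<and> s = a+b+c)"

lemma grow_core:
  assumes R: "mut_reach V E F" and C: "cyc F x y z a b c" and V: "x\<in>V" "y\<in>V" "z\<in>V"
    and D: "distinct [x,y,z]" and w: "2\<le>a" "2\<le>b" "2\<le>c" "6<a+b+c" "c\<le>a" "c\<le>b"
  shows "\<exists>s'. Big s' \<and> a+b+c < s'"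
proof -
  have ab: "2*c < a*b" using ar1 w by blast
  have C': "cyc (mutate y F) x z y (a*b-c) b a" using cyc_mut[OF C D] ab by auto
  have R': "mut_reach V E (mutate y F)" by (rule mut_reach.step[OF R V(2)])
  have "Big ((a*b-c)+b+a)" unfolding Big_def
    apply (rule exI[of _ "mutate y F"], rule exI[of _ x], rule exI[of _ z], rule exI[of _ y])
    apply (rule exI[of _ "a*b-c"], rule exI[of _ b], rule exI[of _ a])
    using R' C' V D w ab by auto
  moreover have "a+b+c < (a*b-c)+b+a" using ab by linarith
  ultimately show ?thesis by blast
qed

lemma grow: assumes "Big s" shows "\<exists>s'. Big s' \<and> s < s'"
proof -
  obtain F x y z a b c where H: "mut_reach V E F" "x\<in>V" "y\<in>V" "z\<in>V" "distinct [x,y,z]"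
     "cyc F x y z a b c" "2\<le>a" "2\<le>b" "2\<le>c" "6<a+b+c" "s = a+b+c"
    using assms unfolding Big_def by blast
  consider "c\<le>a \<and> c\<le>b" | "a\<le>b \<and> a\<le>c" | "b\<le>a \<and> b\<le>c" by linarith
  then show ?thesis
  proof cases
    case 1 then show ?thesis using grow_core[OF H(1,6,2,3,4,5,7,8,9,10)] H(11) by auto
  next
    case 2
    have "cyc F y z x b c a" using H(6) by (rule cyc_rot)
    moreover have "distinct [y,z,x]" using H(5) by auto
    ultimately show ?thesis using grow_core[of F y z x b c a] 2 H by auto
  next
    case 3
    have "cyc F z x y c a b" using cyc_rot[OF cyc_rot[OF H(6)]] .
    moreover have "distinct [z,x,y]" using H(5) by auto
    ultimately show ?thesis using grow_core[of F z x y c a b] 3 H by auto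
  qed
qed

lemma Big_bounded: assumes "Big s" shows "s \<le> 3*B"
proof -
  obtain F x y z a b c where H: "mut_reach V E F" "x\<in>V" "y\<in>V" "z\<in>V" "distinct [x,y,z]"
     "cyc F x y z a b c" "s = a+b+c"
    using assms unfolding Big_def by blast
  have "a \<le> B" "b \<le> B" "c \<le> B" using bnd H unfolding cyc_def by auto
  then show ?thesis using H(7) by linarith
qed

lemma no_Big: "\<not> Big s"
proof
  assume "Big s"
  have "\<forall>n. \<exists>s'. Big s' \<and> n \<le> s'"
  proof
    fix n show "\<exists>s'. Big s' \<and> n \<le> s'"
    proof (induction n)
      case 0 then show ?case using \<open>Big s\<close> by blast
    next
      case (Suc n)
      then obtain s' where "Big s'" "n \<le> s'" by blast
      then show ?case using grow by (meson le_trans less_eq_Suc_le not_less_eq_eq)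
    qed
  qed
  then obtain s' where "Big s'" "3*B+1 \<le> s'" by blast
  then show False using Big_bounded by fastforce
qed

lemma no_big:
  assumes "mut_reach V E F" "x\<in>V" "y\<in>V" "z\<in>V" "distinct [x,y,z]" "cyc F x y z a b c"
    "2\<le>a" "2\<le>b" "2\<le>c"
  shows "a+b+c \<le> 6"
proof (rule ccontr)
  assume "\<not> a+b+c \<le> 6"
  then have "6 < a+b+c" by linarith
  then have "Big (a+b+c)" unfolding Big_def
    apply (rule_tac exI[of _ F], rule_tac exI[of _ x], rule_tac exI[of _ y], rule_tac exI[of _ z])
    apply (rule_tac exI[of _ a], rule_tac exI[of _ b], rule_tac exI[of _ c])
    using assms by auto
  then show False using no_Big by blast
qed

lemma one1:
  assumes R: "mut_reach V E F" and V: "x\<in>V" "y\<in>V" "z\<in>V" and D: "distinct [x,y,z]"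
    and C: "cyc F x y z a b 1" and w: "2\<le>a" "2\<le>b"
  shows False
proof -
  have ab: "4 \<le> a*b" using w mult_le_mono[OF w] by simp
  have C': "cyc (mutate y F) x z y (a*b-1) b a" using cyc_mut[OF C D] ab w by auto
  have R': "mut_reach V E (mutate y F)" by (rule mut_reach.step[OF R V(2)])
  have "(a*b-1)+b+a \<le> 6" using no_big[OF R' V(1) V(3) V(2) _ C'] D w ab by auto
  then show False using ab w by linarith
qed

lemma two1:
  assumes R: "mut_reach V E F" and V: "x\<in>V" "y\<in>V" "z\<in>V" and D: "distinct [x,y,z]"
    and C: "cyc F x y z 1 b 1" and w: "3\<le>b"
  shows False
proof -
  have C1: "cyc F y z x b 1 1" using C by (rule cyc_rot)
  have D1: "distinct [y,z,x]" using D by auto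
  have C2: "cyc (mutate z F) y x z (b*1-1) 1 b" using cyc_mut[OF C1 D1] w by auto
  have C3: "cyc (mutate z F) z y x b (b-1) 1" using cyc_rot[OF cyc_rot[OF C2]] by simp
  have R': "mut_reach V E (mutate z F)" by (rule mut_reach.step[OF R V(3)])
  have "2 \<le> b-1" "2 \<le> b" using w by simp+
  then show False using one1[OF R' V(3) V(2) V(1) _ C3] D by auto
qed

lemma P2:
  assumes R: "mut_reach V E F" and V: "x\<in>V" "y\<in>V" "z\<in>V" and D: "distinct [x,y,z]"
    and C: "cyc F x y z a b c" and w: "1\<le>a" "1\<le>b" "1\<le>c"
  shows "(a=1 \<and> b=1 \<and> c=1) \<or> (a=1 \<and> b=1 \<and> c=2) \<or> (a=1 \<and> b=2 \<and> c=1)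
    \<or> (a=2 \<and> b=1 \<and> c=1) \<or> (a=2 \<and> b=2 \<and> c=2)"
proof -
  have Cy: "cyc F y z x b c a" using C by (rule cyc_rot)
  have Cz: "cyc F z x y c a b" using Cy by (rule cyc_rot)
  have Dy: "distinct [y,z,x]" "distinct [z,x,y]" using D by auto
  have "\<not> (2\<le>a \<and> 2\<le>b \<and> c = 1)" using one1[OF R V D] C by blast
  moreover have "\<not> (2\<le>b \<and> 2\<le>c \<and> a = 1)" using one1[OF R V(2) V(3) V(1) Dy(1)] Cy by blast
  moreover have "\<not> (2\<le>c \<and> 2\<le>a \<and> b = 1)" using one1[OF R V(3) V(1) V(2) Dy(2)] Cz by blast
  moreover have "\<not> (a = 1 \<and> c = 1 \<and> 3 \<le> b)" using two1[OF R V D] C by blast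
  moreover have "\<not> (b = 1 \<and> a = 1 \<and> 3 \<le> c)" using two1[OF R V(2) V(3) V(1) Dy(1)] Cy by blast
  moreover have "\<not> (c = 1 \<and> b = 1 \<and> 3 \<le> a)" using two1[OF R V(3) V(1) V(2) Dy(2)] Cz by blast
  moreover have "2\<le>a \<and> 2\<le>b \<and> 2\<le>c \<longrightarrow> a+b+c \<le> 6" using no_big[OF R V D C] by blast
  ultimately show ?thesis using w
    by (cases "a=1"; cases "a=2"; cases "b=1"; cases "b=2"; cases "c=1"; cases "c=2") auto
qed

lemma P1:
  assumes R: "mut_reach V E F" and V: "x\<in>V" "y\<in>V" "z\<in>V" and D: "distinct [x,y,z]"
    and h: "1 \<le> F x y" "1 \<le> F y z" "F y x = 0" "F z y = 0" "F z x = 0"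
  shows "F x y = 1 \<and> F y z = 1 \<and> F x z \<le> 1"
proof -
  have C: "cyc (mutate y F) x z y (F x y * F y z + F x z) (F y z) (F x y)"
    using path_mut[OF HOL.refl HOL.refl h(3-5) HOL.refl D] .
  have R': "mut_reach V E (mutate y F)" by (rule mut_reach.step[OF R V(2)])
  have D': "distinct [x,z,y]" using D by auto
  have "1 \<le> F x y * F y z" using h by simp
  then have "1 \<le> F x y * F y z + F x z" by linarith
  from P2[OF R' V(1) V(3) V(2) D' C this h(2) h(1)] show ?thesis
    by (auto simp: algebra_simps)
qed

lemma P3:
  assumes R: "mut_reach V E F" and V: "x\<in>V" "y\<in>V" "z\<in>V" and D: "distinct [x,y,z]"
    and h: "1 \<le> F y x" "1 \<le> F y z" "F x y = 0" "F z y = 0" "F z x = 0" "F x z = 0"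
  shows "F y x = 1 \<and> F y z = 1"
proof -
  note M = src_mut[OF HOL.refl HOL.refl h(3-6) D]
  have R': "mut_reach V E (mutate x F)" by (rule mut_reach.step[OF R V(1)])
  have "mutate x F x y = 1 \<and> mutate x F y z = 1 \<and> mutate x F x z \<le> 1"
    by (rule P1[OF R' V D]) (use h in \<open>simp_all add: M\<close>)
  then show ?thesis using M by simp
qed

lemma P4:
  assumes R: "mut_reach V E F" and V: "x\<in>V" "y\<in>V" "z\<in>V" and D: "distinct [x,y,z]"
    and h: "1 \<le> F x y" "1 \<le> F z y" "F y x = 0" "F y z = 0" "F z x = 0" "F x z = 0"
  shows "F x y = 1 \<and> F z y = 1"
proof -
  note M = snk_mut[OF HOL.refl HOL.refl h(3-6) D]
  have R': "mut_reach V E (mutate x F)" by (rule mut_reach.step[OF R V(1)])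
  have D': "distinct [z,y,x]" using D by auto
  have "mutate x F z y = 1 \<and> mutate x F y x = 1 \<and> mutate x F z x \<le> 1"
    by (rule P1[OF R' V(3) V(2) V(1) D']) (use h in \<open>simp_all add: M\<close>)
  then show ?thesis using M by simp
qed

end




lemma iso3:
  fixes G :: "nat \<Rightarrow> nat \<Rightarrow> nat"
  assumes "distinct [x,y,z]" "E x x = 0" "E y y = 0" "E z z = 0"
    "G 1 1 = 0" "G 2 2 = 0" "G 3 3 = 0"
    "E x y = G 1 2" "E y x = G 2 1" "E x z = G 1 3" "E z x = G 3 1" "E y z = G 2 3" "E z y = G 3 2"
  shows "graph_iso {x,y,z} E {1,2,3} G"
  unfolding graph_iso_def
  apply (rule exI[of _ "\<lambda>u. if u = x then 1 else if u = y then 2 else 3"])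
  using assms unfolding bij_betw_def inj_on_def by auto

lemma tyI: "G \<in> {A3_a, A3_b, A3_c, A3_d, A2hat_e, A2hat_f} \<Longrightarrow> graph_iso W E {1,2,3} G
  \<Longrightarrow> type_A3_or_A2hat W E"
  unfolding type_A3_or_A2hat_def by blast

definition MK :: "('a \<Rightarrow> 'a \<Rightarrow> nat) \<Rightarrow> 'a set \<Rightarrow> bool" where
  "MK E W \<longleftrightarrow> (\<exists>p q r. W = {p,q,r} \<and> distinct [p,q,r] \<and> cyc E p q r 2 2 2)"

context
  fixes V :: "'a set" and E :: "'a \<Rightarrow> 'a \<Rightarrow> nat" and B :: nat
  assumes bnd: "\<forall>F. mut_reach V E F \<longrightarrow> (\<forall>u\<in>V. \<forall>v\<in>V. F u v \<le> B)"
    and Qd: "\<forall>u. E u u = 0" and Qa: "\<forall>u v. 0 < E u v \<longrightarrow> E v u = 0"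
begin

lemma R0: "mut_reach V E E" by (rule mut_reach.refl)

lemma P1_type:
  assumes V: "x\<in>V" "y\<in>V" "z\<in>V" and D: "distinct [x,y,z]"
    and h: "1 \<le> E x y" "1 \<le> E y z" "E y x = 0" "E z y = 0" "E z x = 0"
  shows "type_A3_or_A2hat {x,y,z} E"
proof -
  have w: "E x y = 1" "E y z = 1" "E x z \<le> 1" using P1[OF bnd R0 V D h] by auto
  have dg: "E x x = 0" "E y y = 0" "E z z = 0" using Qd by auto
  show ?thesis
  proof (cases "E x z = 0")
    case True
    show ?thesis apply (rule tyI[of A3_a]) apply simp apply (rule iso3) using D dg w h True by (auto simp: A3_a_def)
  next
    case False
    then have "E x z = 1" using w by auto
    note eqs = this show ?thesis apply (rule tyI[of A2hat_e]) apply simp apply (rule iso3) using D dg w h  eqs by (auto simp: A2hat_e_def)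
  qed
qed

lemma P3_type:
  assumes V: "x\<in>V" "y\<in>V" "z\<in>V" and D: "distinct [x,y,z]"
    and h: "1 \<le> E y x" "1 \<le> E y z" "E x y = 0" "E z y = 0" "E z x = 0" "E x z = 0"
  shows "type_A3_or_A2hat {x,y,z} E"
proof -
  have w: "E y x = 1" "E y z = 1" using P3[OF bnd R0 V D h] by auto
  have dg: "E x x = 0" "E y y = 0" "E z z = 0" using Qd by auto
  show ?thesis apply (rule tyI[of A3_b]) apply simp apply (rule iso3) using D dg w h by (auto simp: A3_b_def)
qed

lemma P4_type:
  assumes V: "x\<in>V" "y\<in>V" "z\<in>V" and D: "distinct [x,y,z]"
    and h: "1 \<le> E x y" "1 \<le> E z y" "E y x = 0" "E y z = 0" "E z x = 0" "E x z = 0"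
  shows "type_A3_or_A2hat {x,y,z} E"
proof -
  have w: "E x y = 1" "E z y = 1" using P4[OF bnd R0 V D h] by auto
  have dg: "E x x = 0" "E y y = 0" "E z z = 0" using Qd by auto
  show ?thesis apply (rule tyI[of A3_c]) apply simp apply (rule iso3) using D dg w h by (auto simp: A3_c_def)
qed


lemma cyc_type:
  assumes V: "x\<in>V" "y\<in>V" "z\<in>V" and D: "distinct [x,y,z]"
    and C: "cyc E x y z a b c" and w: "1\<le>a" "1\<le>b" "1\<le>c"
  shows "type_A3_or_A2hat {x,y,z} E \<or> MK E {x,y,z}"
proof -
  have dg: "E x x = 0" "E y y = 0" "E z z = 0" using Qd by auto
  have e: "E x y = a" "E y z = b" "E z x = c" "E y x = 0" "E z y = 0" "E x z = 0"
    using C unfolding cyc_def by auto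
  have s1: "{z,x,y} = {x,y,z}" "{y,z,x} = {x,y,z}" by auto
  from P2[OF bnd R0 V D C w] show ?thesis
  proof (elim disjE conjE)
    assume "a = 1" "b = 1" "c = 1"
    note eqs = this show ?thesis
      apply (rule disjI1, rule tyI[of A3_d]) apply simp apply (rule iso3) using D dg e  eqs by (auto simp: A3_d_def)
  next
    assume "a = 1" "b = 1" "c = 2"
    note eqs = this show ?thesis
      apply (rule disjI1, rule tyI[of A2hat_f]) apply simp apply (rule iso3) using D dg e  eqs by (auto simp: A2hat_f_def)
  next
    assume "a = 1" "b = 2" "c = 1"
    note eqs = this have "type_A3_or_A2hat {z,x,y} E"
      apply (rule tyI[of A2hat_f]) apply simp apply (rule iso3) using D dg e  eqs by (auto simp: A2hat_f_def)
    then show ?thesis using s1 by simp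
  next
    assume "a = 2" "b = 1" "c = 1"
    note eqs = this have "type_A3_or_A2hat {y,z,x} E"
      apply (rule tyI[of A2hat_f]) apply simp apply (rule iso3) using D dg e  eqs by (auto simp: A2hat_f_def)
    then show ?thesis using s1 by simp
  next
    assume "a = 2" "b = 2" "c = 2"
    then show ?thesis using C D unfolding MK_def by blast
  qed
qed


lemma center:
  assumes V: "x\<in>V" "y\<in>V" "z\<in>V" and D: "distinct [x,y,z]"
    and A1: "0<E x y \<or> 0<E y x" and A2: "0<E y z \<or> 0<E z y"
  shows "type_A3_or_A2hat {x,y,z} E \<or> MK E {x,y,z}"
proof -
  have D': "distinct [x,z,y]" "distinct [z,x,y]" "distinct [y,x,z]" "distinct [y,z,x]" "distinct [z,y,x]"
    using D by auto
  have S: "{x,z,y} = {x,y,z}" "{z,x,y} = {x,y,z}" "{y,x,z} = {x,y,z}" "{y,z,x} = {x,y,z}"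
     "{z,y,x} = {x,y,z}" by auto
  have Q: "\<And>u v. 0 < E u v \<Longrightarrow> E v u = 0" using Qa by blast
  have c1: "0<E x y \<Longrightarrow> 0<E y z \<Longrightarrow> E z x = 0 \<Longrightarrow> ?thesis"
  proof -
    assume h: "0<E x y" "0<E y z" "E z x = 0"
    have "type_A3_or_A2hat {x,y,z} E" by (rule P1_type[OF V D]) (simp_all add: Suc_le_eq h Q[OF h(1)] Q[OF h(2)])
    then show ?thesis by simp
  qed
  have c3: "0<E x y \<Longrightarrow> 0<E y z \<Longrightarrow> 0 < E z x \<Longrightarrow> ?thesis"
  proof -
    assume h: "0<E x y" "0<E y z" "0 < E z x"
    have "cyc E x y z (E x y) (E y z) (E z x)" unfolding cyc_def
      using h Q[OF h(1)] Q[OF h(2)] Q[OF h(3)] by simp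
    from cyc_type[OF V D this] h show ?thesis by simp
  qed
  have c4: "0<E x y \<Longrightarrow> 0<E z y \<Longrightarrow> E x z = 0 \<Longrightarrow> E z x = 0 \<Longrightarrow> ?thesis"
  proof -
    assume h: "0<E x y" "0<E z y" "E x z = 0" "E z x = 0"
    have "type_A3_or_A2hat {x,y,z} E" by (rule P4_type[OF V D]) (simp_all add: Suc_le_eq h Q[OF h(1)] Q[OF h(2)])
    then show ?thesis by simp
  qed
  have c5: "0<E x y \<Longrightarrow> 0<E z y \<Longrightarrow> 0<E x z \<Longrightarrow> ?thesis"
  proof -
    assume h: "0<E x y" "0<E z y" "0<E x z"
    have "type_A3_or_A2hat {x,z,y} E" by (rule P1_type[OF V(1) V(3) V(2) D'(1)]) (simp_all add: Suc_le_eq h Q[OF h(1)] Q[OF h(2)] Q[OF h(3)])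
    then show ?thesis using S by simp
  qed
  have c6: "0<E x y \<Longrightarrow> 0<E z y \<Longrightarrow> 0<E z x \<Longrightarrow> ?thesis"
  proof -
    assume h: "0<E x y" "0<E z y" "0<E z x"
    have "type_A3_or_A2hat {z,x,y} E" by (rule P1_type[OF V(3) V(1) V(2) D'(2)]) (simp_all add: Suc_le_eq h Q[OF h(1)] Q[OF h(2)] Q[OF h(3)])
    then show ?thesis using S by simp
  qed
  have c7: "0<E y x \<Longrightarrow> 0<E y z \<Longrightarrow> E x z = 0 \<Longrightarrow> E z x = 0 \<Longrightarrow> ?thesis"
  proof -
    assume h: "0<E y x" "0<E y z" "E x z = 0" "E z x = 0"
    have "type_A3_or_A2hat {x,y,z} E" by (rule P3_type[OF V D]) (simp_all add: Suc_le_eq h Q[OF h(1)] Q[OF h(2)])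
    then show ?thesis by simp
  qed
  have c8: "0<E y x \<Longrightarrow> 0<E y z \<Longrightarrow> 0<E x z \<Longrightarrow> ?thesis"
  proof -
    assume h: "0<E y x" "0<E y z" "0<E x z"
    have "type_A3_or_A2hat {y,x,z} E" by (rule P1_type[OF V(2) V(1) V(3) D'(3)]) (simp_all add: Suc_le_eq h Q[OF h(1)] Q[OF h(2)] Q[OF h(3)])
    then show ?thesis using S by simp
  qed
  have c9: "0<E y x \<Longrightarrow> 0<E y z \<Longrightarrow> 0<E z x \<Longrightarrow> ?thesis"
  proof -
    assume h: "0<E y x" "0<E y z" "0<E z x"
    have "type_A3_or_A2hat {y,z,x} E" by (rule P1_type[OF V(2) V(3) V(1) D'(4)]) (simp_all add: Suc_le_eq h Q[OF h(1)] Q[OF h(2)] Q[OF h(3)])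
    then show ?thesis using S by simp
  qed
  have c10: "0<E y x \<Longrightarrow> 0<E z y \<Longrightarrow> E x z = 0 \<Longrightarrow> ?thesis"
  proof -
    assume h: "0<E y x" "0<E z y" "E x z = 0"
    have "type_A3_or_A2hat {z,y,x} E" by (rule P1_type[OF V(3) V(2) V(1) D'(5)]) (simp_all add: Suc_le_eq h Q[OF h(1)] Q[OF h(2)])
    then show ?thesis using S by simp
  qed
  have c11: "0<E y x \<Longrightarrow> 0<E z y \<Longrightarrow> 0 < E x z \<Longrightarrow> ?thesis"
  proof -
    assume h: "0<E y x" "0<E z y" "0 < E x z"
    have "cyc E x z y (E x z) (E z y) (E y x)" unfolding cyc_def
      using h Q[OF h(1)] Q[OF h(2)] Q[OF h(3)] by simp
    from cyc_type[OF V(1) V(3) V(2) D'(1) this] h have "type_A3_or_A2hat {x,z,y} E \<or> MK E {x,z,y}" by simp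
    then show ?thesis using S by simp
  qed
  show ?thesis using A1 A2 c1 c3 c4 c5 c6 c7 c8 c9 c10 c11 by blast
qed

lemma L2:
  assumes V: "x\<in>V" "y\<in>V" "d\<in>V" and D: "distinct [x,y,d]" and e: "E x y = 2"
    and adj: "0<E d x \<or> 0<E x d \<or> 0<E d y \<or> 0<E y d"
  shows "0<E y d \<and> 0<E d x"
proof -
  have Q: "\<And>u v. 0 < E u v \<Longrightarrow> E v u = 0" using Qa by blast
  have yx: "E y x = 0" using Q e by simp
  have D': "distinct [d,x,y]" "distinct [x,d,y]" "distinct [y,x,d]" using D by auto
  have k1: "0<E y d \<Longrightarrow> E d x = 0 \<Longrightarrow> False"
  proof -
    assume h: "0<E y d" "E d x = 0"
    have "E x y = 1 \<and> E y d = 1 \<and> E x d \<le> 1" by (rule P1[OF bnd R0 V D]) (simp_all add: Suc_le_eq h Q[OF h(1)] yx e)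
    then show False using e by simp
  qed
  have k2: "E y d = 0 \<Longrightarrow> 0 < E d x \<Longrightarrow> False"
  proof -
    assume h: "E y d = 0" "0 < E d x"
    have "E d x = 1 \<and> E x y = 1 \<and> E d y \<le> 1" by (rule P1[OF bnd R0 V(3) V(1) V(2) D'(1)]) (simp_all add: Suc_le_eq h Q[OF h(2)] yx e)
    then show False using e by simp
  qed
  have k3: "E y d = 0 \<Longrightarrow> E d x = 0 \<Longrightarrow> 0 < E x d \<Longrightarrow> 0 < E d y \<Longrightarrow> False"
  proof -
    assume h: "E y d = 0" "E d x = 0" "0 < E x d" "0 < E d y"
    have "E x d = 1 \<and> E d y = 1 \<and> E x y \<le> 1" by (rule P1[OF bnd R0 V(1) V(3) V(2) D'(2)]) (simp_all add: Suc_le_eq h Q[OF h(3)] Q[OF h(4)] yx e)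
    then show False using e by simp
  qed
  have k4: "E y d = 0 \<Longrightarrow> E d x = 0 \<Longrightarrow> 0 < E x d \<Longrightarrow> E d y = 0 \<Longrightarrow> False"
  proof -
    assume h: "E y d = 0" "E d x = 0" "0 < E x d" "E d y = 0"
    have "E x y = 1 \<and> E x d = 1" by (rule P3[OF bnd R0 V(2) V(1) V(3) D'(3)]) (simp_all add: Suc_le_eq h Q[OF h(3)] yx e)
    then show False using e by simp
  qed
  have k5: "E y d = 0 \<Longrightarrow> E d x = 0 \<Longrightarrow> E x d = 0 \<Longrightarrow> 0 < E d y \<Longrightarrow> False"
  proof -
    assume h: "E y d = 0" "E d x = 0" "E x d = 0" "0 < E d y"
    have "E x y = 1 \<and> E d y = 1" by (rule P4[OF bnd R0 V D]) (simp_all add: Suc_le_eq h Q[OF h(4)] yx e)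
    then show False using e by simp
  qed
  show ?thesis using adj k1 k2 k3 k4 k5 by auto
qed

lemma MK_contra:
  assumes C: "cyc E p q r 2 2 2" and V: "p\<in>V" "q\<in>V" "r\<in>V" "d\<in>V" and D: "distinct [p,q,r,d]"
    and adj: "0<E p d \<or> 0<E d p"
  shows False
proof -
  have e: "E p q = 2" "E q r = 2" using C unfolding cyc_def by auto
  have "0<E q d \<and> 0<E d p" using L2[OF V(1) V(2) V(4) _ e(1)] D adj by auto
  moreover have "0<E r d \<and> 0<E d q" using L2[OF V(2) V(3) V(4) _ e(2)] D calculation by auto
  ultimately show False using Qa by auto
qed

end

lemma exit_path:
  assumes "(u,v) \<in> R\<^sup>*" "u \<in> W" "v \<notin> W"
  shows "\<exists>a\<in>W. \<exists>b. b \<notin> W \<and> (a,b) \<in> R"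
  using assms
proof (induction rule: rtrancl_induct)
  case base then show ?case by simp
next
  case (step y z)
  then show ?case by (cases "y \<in> W") auto
qed

lemma conn_nbr:
  assumes "connected_on W E" "u \<in> W" "v \<in> W" "u \<noteq> v"
  shows "\<exists>w\<in>W. 0 < E u w \<or> 0 < E w u"
proof -
  have "(u,v) \<in> {(u, v). u \<in> W \<and> v \<in> W \<and> (E u v > 0 \<or> E v u > 0)}\<^sup>*"
    using assms unfolding connected_on_def by blast
  then show ?thesis using assms(4) by (cases rule: converse_rtranclE) auto
qed

theorem corollary8:
  fixes V :: "'a set" and E :: "'a \<Rightarrow> 'a \<Rightarrow> nat"
  assumes "quiver V E"
    and "connected_on V E"
    and "mutation_finite V E"
    and "card V \<ge> 4"
  shows "\<forall>W. W \<subseteq> V \<and> card W = 3 \<and> connected_on W E \<longrightarrow> type_A3_or_A2hat W E"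
proof (intro allI impI, elim conjE)
  fix W assume WV: "W \<subseteq> V" and c3: "card W = 3" and cW: "connected_on W E"
  obtain B where bnd: "\<forall>F. mut_reach V E F \<longrightarrow> (\<forall>u\<in>V. \<forall>v\<in>V. F u v \<le> B)"
    using mf_bound assms(1,3) by blast
  have Qd: "\<forall>u. E u u = 0" and Qa: "\<forall>u v. 0 < E u v \<longrightarrow> E v u = 0" and fV: "finite V"
    using assms(1) unfolding quiver_def by auto
  obtain x y z where W: "W = {x,y,z}" and D0: "x \<noteq> y" "y \<noteq> z" "x \<noteq> z"
    using c3 unfolding card_3_iff by blast
  have D: "distinct [x,y,z]" using D0 by simp
  have V: "x\<in>V" "y\<in>V" "z\<in>V" using W WV by auto
  have nx: "\<exists>w\<in>W. 0 < E x w \<or> 0 < E w x" using conn_nbr[OF cW, of x y] W D by auto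
  have ny: "\<exists>w\<in>W. 0 < E y w \<or> 0 < E w y" using conn_nbr[OF cW, of y x] W D by auto
  have nz: "\<exists>w\<in>W. 0 < E z w \<or> 0 < E w z" using conn_nbr[OF cW, of z x] W D by auto
  note cen = center[OF bnd Qd Qa]
  have "type_A3_or_A2hat W E \<or> MK E W"
  proof -
    have a1: "(0<E x y \<or> 0<E y x) \<Longrightarrow> (0<E y z \<or> 0<E z y) \<Longrightarrow> ?thesis"
      using cen[OF V D] W by auto
    have a2: "(0<E y x \<or> 0<E x y) \<Longrightarrow> (0<E x z \<or> 0<E z x) \<Longrightarrow> ?thesis"
    proof -
      assume h: "(0<E y x \<or> 0<E x y)" "(0<E x z \<or> 0<E z x)"
      have "distinct [y,x,z]" using D by auto
      moreover have "{y,x,z} = W" using W by auto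
      ultimately show ?thesis using cen[OF V(2) V(1) V(3)] h by metis
    qed
    have a3: "(0<E x z \<or> 0<E z x) \<Longrightarrow> (0<E z y \<or> 0<E y z) \<Longrightarrow> ?thesis"
    proof -
      assume h: "(0<E x z \<or> 0<E z x)" "(0<E z y \<or> 0<E y z)"
      have "distinct [x,z,y]" using D by auto
      moreover have "{x,z,y} = W" using W by auto
      ultimately show ?thesis using cen[OF V(1) V(3) V(2)] h by metis
    qed
    show ?thesis using nx ny nz W Qd a1 a2 a3 by auto
  qed
  moreover have "\<not> MK E W"
  proof
    assume "MK E W"
    then obtain p q r where M: "W = {p,q,r}" "distinct [p,q,r]" "cyc E p q r 2 2 2"
      unfolding MK_def by blast
    have "card W < card V" using c3 assms(4) by simp
    have "\<not> V \<subseteq> W"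
    proof
      assume "V \<subseteq> W"
      then have "card V \<le> card W" using W by (intro card_mono) auto
      then show False using \<open>card W < card V\<close> by simp
    qed
    then obtain v where v: "v \<in> V" "v \<notin> W" by blast
    have "(p, v) \<in> {(u, v). u \<in> V \<and> v \<in> V \<and> (E u v > 0 \<or> E v u > 0)}\<^sup>*"
      using assms(2) v M WV unfolding connected_on_def by auto
    from exit_path[OF this _ v(2)] M obtain a d where
      ad: "a \<in> W" "d \<notin> W" "d \<in> V" "0 < E a d \<or> 0 < E d a" by auto
    have pqr: "p\<in>V" "q\<in>V" "r\<in>V" using M WV by auto
    have cr: "cyc E q r p 2 2 2" "cyc E r p q 2 2 2" using cyc_rot[OF M(3)] cyc_rot[OF cyc_rot[OF M(3)]] by auto
    have "a = p \<or> a = q \<or> a = r" using ad M by auto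
    then show False
    proof (elim disjE)
      assume "a = p" then show False
        using MK_contra[OF bnd Qd Qa M(3) pqr ad(3)] M ad by auto
    next
      assume "a = q" then show False
        using MK_contra[OF bnd Qd Qa cr(1) pqr(2) pqr(3) pqr(1) ad(3)] M ad by auto
    next
      assume "a = r" then show False
        using MK_contra[OF bnd Qd Qa cr(2) pqr(3) pqr(1) pqr(2) ad(3)] M ad by auto
    qed
  qed
  ultimately show "type_A3_or_A2hat W E" by blast
qed


end
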